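(* Let $k$ be an algebraically closed field of characteristic zero, $n\ge1$, $q\in k$ a primitive $2n$-th root of unity, $a\in k\setminus\{0\}$, and let $H=H_{4n}$ be the Hopf algebra generated by $z,x$ with $z^{2n}=1$, $zx=qxz$, $x^2=0$, $\Delta(z)=z\otimes z+a(1-q^{-2})z^{n+1}x\otimes zx$, $\Delta(x)=x\otimes 1+z^n\otimes x$, $\epsilon(z)=1$, $\epsilon(x)=0$, $S(z)=z^{-1}$, $S(x)=-z^nx$. For $i\in\mathbb Z_{2n}$ let $S_i$ be the $1$-dimensional $H$-module with basis $v_i$, $x\cdot v_i=0$, $z\cdot v_i=q^iv_i$, and let $M_i$ be the $2$-dimensional $H$-module with basis $v_1^i,v_2^i$ on which $x v_1^i=v_2^i$, $xv_2^i=0$, $zv_1^i=q^iv_1^i$, $zv_2^i=q^{i+1}v_2^i$. Then for all $i,j\in\mathbb Z_{2n}$, as $H$-modules (with the tensor product module structure via $\Delta$): (1) $S_i\otimes S_j\cong S_{i+j}$; (2) $S_i\otimes M_j\cong M_{i+j}$; (3) $M_i\otimes M_j\cong M_{i+j}\oplus M_{i+j+1}$, where indices are taken modulo $2n$. *)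

theory Defs
  imports "Jordan_Normal_Form.Matrix" "HOL-Computational_Algebra.Polynomial"
begin

definition alg_closed :: "'k::field itself \<Rightarrow> bool" where
  "alg_closed _ \<longleftrightarrow> (\<forall>p :: 'k poly. degree p > 0 \<longrightarrow> (\<exists>x. poly p x = 0))"

definition primitive_root :: "nat \<Rightarrow> 'k::field \<Rightarrow> bool" where
  "primitive_root m q \<longleftrightarrow> q ^ m = 1 \<and> (\<forall>l. 0 < l \<and> l < m \<longrightarrow> q ^ l \<noteq> 1)"

(* A finite-dimensional H_{4n}-module (with a chosen basis) is given by the
   matrices by which the generators z and x act: a pair (Z, X). *)
type_synonym 'k hmod = "'k mat \<times> 'k mat"

definition kron :: "'k::semiring_1 mat \<Rightarrow> 'k mat \<Rightarrow> 'k mat" where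
  "kron A B = mat (dim_row A * dim_row B) (dim_col A * dim_col B)
     (\<lambda>(i,j). A $$ (i div dim_row B, j div dim_col B) * B $$ (i mod dim_row B, j mod dim_col B))"

(* tensor product module via the coproduct
   Delta(z) = z(x)z + a(1-q^-2) z^(n+1)x (x) zx,  Delta(x) = x(x)1 + z^n(x)x *)
definition tensor_mod :: "nat \<Rightarrow> 'k::field \<Rightarrow> 'k \<Rightarrow> 'k hmod \<Rightarrow> 'k hmod \<Rightarrow> 'k hmod" where
  "tensor_mod n q a M N = (let (Z1, X1) = M; (Z2, X2) = N; d1 = dim_row Z1; d2 = dim_row Z2 in
     (kron Z1 Z2 + (a * (1 - inverse q ^ 2)) \<cdot>\<^sub>m kron (Z1 ^\<^sub>m (n+1) * X1) (Z2 * X2),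
      kron X1 (1\<^sub>m d2) + kron (Z1 ^\<^sub>m n) X2))"

definition dsum_mod :: "'k::zero hmod \<Rightarrow> 'k hmod \<Rightarrow> 'k hmod" where
  "dsum_mod M N = (let (Z1, X1) = M; (Z2, X2) = N; d1 = dim_row Z1; d2 = dim_row Z2 in
     (four_block_mat Z1 (0\<^sub>m d1 d2) (0\<^sub>m d2 d1) Z2,
      four_block_mat X1 (0\<^sub>m d1 d2) (0\<^sub>m d2 d1) X2))"

definition mod_iso :: "'k::field hmod \<Rightarrow> 'k hmod \<Rightarrow> bool" where
  "mod_iso M N = (let (Z1, X1) = M; (Z2, X2) = N; d = dim_row Z1 in
     dim_row Z2 = d \<and> (\<exists>P Q. P \<in> carrier_mat d d \<and> Q \<in> carrier_mat d d \<and>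
        P * Q = 1\<^sub>m d \<and> Q * P = 1\<^sub>m d \<and> P * Z1 = Z2 * P \<and> P * X1 = X2 * P))"

definition S_mod :: "'k::field \<Rightarrow> nat \<Rightarrow> 'k hmod" where
  "S_mod q i = (mat 1 1 (\<lambda>_. q ^ i), 0\<^sub>m 1 1)"

(* M_i: basis v1, v2 (indices 0,1); x v1 = v2, x v2 = 0, z v1 = q^i v1, z v2 = q^(i+1) v2.
   Column j of the matrix is the image of the j-th basis vector. *)
definition M_mod :: "'k::field \<Rightarrow> nat \<Rightarrow> 'k hmod" where
  "M_mod q i = (mat 2 2 (\<lambda>(r,c). if r = c then (if r = 0 then q ^ i else q ^ (i+1)) else 0),
                mat 2 2 (\<lambda>(r,c). if r = 1 \<and> c = 0 then 1 else 0))"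

end

theory Submission imports Defs begin

lemma mat_mult_mat: "mat m k f * mat k l g = mat m l (\<lambda>(i,j). \<Sum>r<k. f(i,r) * g(r,j))"
  by (rule eq_matI) (auto simp: scalar_prod_def row_def col_def intro!: sum.cong)

lemma mat_add_mat: "mat m k f + mat m k g = mat m k (\<lambda>ij. f ij + g ij)"
  by (rule eq_matI) auto

lemma mat_smult: "c \<cdot>\<^sub>m mat m k f = mat m k (\<lambda>ij. c * f ij)"
  by (rule eq_matI) auto

lemma kron_mat: "kron (mat a b f) (mat c d g) =
   mat (a*c) (b*d) (\<lambda>(i,j). f (i div c, j div d) * g (i mod c, j mod d))"
  unfolding kron_def
proof (rule eq_matI, goal_cases)
  case (1 i j)
  then have "c > 0" "d > 0" by (auto intro: gr0I)
  with 1 show ?case by (simp add: less_mult_imp_div_less mult.commute)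
qed auto

lemma diag_pow: "mat 2 2 (\<lambda>(r,c). if r = c then (if r = 0 then x else y) else 0) ^\<^sub>m k
  = mat 2 2 (\<lambda>(r,c). if r = c then (if r = 0 then x^k else y^k) else (0::'a::field))"
proof (induction k)
  case 0 then show ?case by (simp add: one_mat_def, rule cong_mat, auto)
next
  case (Suc k)
  show ?case apply (simp add: Suc mat_mult_mat)
    apply (rule cong_mat) apply (auto simp: eval_nat_numeral)
    done
qed

lemma sum2: "(\<Sum>r<2. f r) = f 0 + f (1::nat)" by (simp add: eval_nat_numeral)
lemma sum4: "(\<Sum>r<4. f r) = f 0 + f 1 + f 2 + f (3::nat)" by (simp add: eval_nat_numeral)
lemma less4: "(r::nat) < 4 \<longleftrightarrow> r = 0 \<or> r = 1 \<or> r = 2 \<or> r = 3" by auto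
lemma less2: "(r::nat) < 2 \<longleftrightarrow> r = 0 \<or> r = 1" by auto

lemma tensor_MM: "tensor_mod n q a (M_mod q i) (M_mod q j) =
  (mat 4 4 (\<lambda>(r,c). if r = c then (if r = 0 then q^(i+j) else if r = 3 then q^(i+j)*q^2 else q^(i+j)*q)
      else if r = 3 \<and> c = 0 then a * (1 - inverse q ^ 2) * (q^(i+1))^(n+1) * q^(j+1) else 0),
   mat 4 4 (\<lambda>(r,c). if r = 1 \<and> c = 0 then (q^i)^n else if (r = 2 \<and> c = 0) \<or> (r = 3 \<and> c = 1) then 1
      else if r = 3 \<and> c = 2 then (q^(i+1))^n else 0))"
  unfolding tensor_mod_def M_mod_def Let_def
  apply (simp add: diag_pow mat_mult_mat kron_mat mat_smult one_mat_def mat_add_mat)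
  apply (intro conjI; rule cong_mat; simp only: less4; elim disjE; simp add: sum2 power_add power2_eq_square)
  done

lemma dsum_MM: "dsum_mod (M_mod q k) (M_mod q (k+1)) =
  (mat 4 4 (\<lambda>(r,c). if r = c then (if r = 0 then q^k else if r = 3 then q^k*q^2 else q^k*q) else 0),
   mat 4 4 (\<lambda>(r,c). if (r = 1 \<and> c = 0) \<or> (r = 3 \<and> c = 2) then 1 else 0))"
  unfolding dsum_mod_def M_mod_def Let_def
  apply (simp)
  apply (intro conjI eq_matI; (simp only: dim_row_mat less4 dim_col_mat)?; (elim disjE)?; simp add: power2_eq_square)
  done

lemma iso4:
  fixes l c' t s :: "'k::field"
  assumes "s*s = 1" "c' = t * l * (1 - q^2)"
  shows "mod_iso (mat 4 4 (\<lambda>(r,c). if r = c then (if r = 0 then l else if r = 3 then l*q^2 else l*q)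
      else if r = 3 \<and> c = 0 then c' else 0),
   mat 4 4 (\<lambda>(r,c). if r = 1 \<and> c = 0 then s else if (r = 2 \<and> c = 0) \<or> (r = 3 \<and> c = 1) then 1
      else if r = 3 \<and> c = 2 then -s else 0))
   (mat 4 4 (\<lambda>(r,c). if r = c then (if r = 0 then l else if r = 3 then l*q^2 else l*q) else 0),
   mat 4 4 (\<lambda>(r,c). if (r = 1 \<and> c = 0) \<or> (r = 3 \<and> c = 2) then 1 else 0))"
  unfolding mod_iso_def Let_def
  apply simp
  apply (rule exI[of _ "mat 4 4 (\<lambda>(r,c). if r = c \<and> (r = 0 \<or> r = 3) then 1 else if (r = 1 \<and> c = 2) \<or> (r = 2 \<and> c = 1) then 1
      else if r = 2 \<and> c = 2 then -s else if r = 3 \<and> c = 0 then -t else 0)"])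
  apply (rule conjI, simp)
  apply (rule exI[of _ "mat 4 4 (\<lambda>(r,c). if r = c \<and> (r = 0 \<or> r = 3) then 1 else if r = 1 \<and> c = 1 then s else if (r = 1 \<and> c = 2) \<or> (r = 2 \<and> c = 1) then 1
      else if r = 3 \<and> c = 0 then t else 0)"])
  apply (simp add: mat_mult_mat one_mat_def)
  apply (intro conjI; rule cong_mat; simp only: less4; elim disjE; simp add: sum4 assms algebra_simps)
  done

lemma pow1: "mat (Suc 0) (Suc 0) (\<lambda>_. x) ^\<^sub>m k = mat (Suc 0) (Suc 0) (\<lambda>_. (x::'a::field)^k)"
proof (induction k)
  case 0 then show ?case by (simp add: one_mat_def, rule cong_mat, auto)
next
  case (Suc k)
  show ?case apply (simp add: Suc mat_mult_mat)
    apply (rule cong_mat) apply (auto simp: eval_nat_numeral)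
    done
qed

lemma tensor_SS: "tensor_mod n q a (S_mod q i) (S_mod q j) = (mat 1 1 (\<lambda>_. q^(i+j)), mat 1 1 (\<lambda>_. 0))"
  unfolding tensor_mod_def S_mod_def Let_def
  apply (simp add: mat_mult_mat kron_mat mat_smult one_mat_def mat_add_mat zero_mat_def pow1 power_add)
  done

lemma tensor_SM: "tensor_mod n q a (S_mod q i) (M_mod q j) =
  (mat 2 2 (\<lambda>(r,c). if r = c then (if r = 0 then q^(i+j) else q^(i+j)*q) else 0),
   mat 2 2 (\<lambda>(r,c). if r = 1 \<and> c = 0 then (q^i)^n else 0))"
  unfolding tensor_mod_def S_mod_def M_mod_def Let_def
  apply (simp add: mat_mult_mat kron_mat mat_smult one_mat_def mat_add_mat zero_mat_def pow1)
  apply (intro conjI; rule cong_mat; simp only: less2; elim disjE; simp add: power_add)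
  done

lemma iso2:
  fixes l s :: "'k::field"
  assumes "s \<noteq> 0"
  shows "mod_iso (mat 2 2 (\<lambda>(r,c). if r = c then (if r = 0 then l else l*q) else 0),
   mat 2 2 (\<lambda>(r,c). if r = 1 \<and> c = 0 then s else 0))
   (mat 2 2 (\<lambda>(r,c). if r = c then (if r = 0 then l else l*q) else 0),
   mat 2 2 (\<lambda>(r,c). if r = 1 \<and> c = 0 then 1 else 0))"
  unfolding mod_iso_def Let_def
  apply simp
  apply (rule exI[of _ "mat 2 2 (\<lambda>(r,c). if r = c then (if r = 0 then s else 1) else 0)"])
  apply (rule conjI, simp)
  apply (rule exI[of _ "mat 2 2 (\<lambda>(r,c). if r = c then (if r = 0 then inverse s else 1) else 0)"])
  apply (simp add: mat_mult_mat one_mat_def)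
  apply (intro conjI; rule cong_mat; simp only: less2; elim disjE; simp add: sum2 assms)
  done

theorem theorem2p1:
  fixes q a :: "'k::field_char_0" and n :: nat
  assumes "alg_closed TYPE('k)"
    and "n \<ge> 1"
    and "primitive_root (2*n) q"
    and "a \<noteq> 0"
  shows "\<forall>i < 2*n. \<forall>j < 2*n.
      mod_iso (tensor_mod n q a (S_mod q i) (S_mod q j)) (S_mod q ((i+j) mod (2*n))) \<and>
      mod_iso (tensor_mod n q a (S_mod q i) (M_mod q j)) (M_mod q ((i+j) mod (2*n))) \<and>
      mod_iso (tensor_mod n q a (M_mod q i) (M_mod q j))
              (dsum_mod (M_mod q ((i+j) mod (2*n))) (M_mod q ((i+j+1) mod (2*n))))"
proof (intro allI impI)
  fix i j assume "i < 2*n" "j < 2*n"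
  have q2n: "q^(2*n) = 1" and prim: "\<And>l. 0 < l \<Longrightarrow> l < 2*n \<Longrightarrow> q^l \<noteq> 1"
    using assms(3) unfolding primitive_root_def by auto
  have q0: "q \<noteq> 0" using q2n assms(2) by (metis one_neq_zero power_0_left mult_pos_pos zero_less_numeral
      less_le_trans zero_less_one not_gr0)
  have qm: "q^(m mod (2*n)) = q^m" for m
  proof -
    have "q^m = q^((m div (2*n))*(2*n)) * q^(m mod (2*n))"
      by (simp only: power_add[symmetric] div_mult_mod_eq)
    moreover have "q^((m div (2*n))*(2*n)) = 1"
      by (metis mult.commute power_mult q2n power_one)
    ultimately show ?thesis by simp
  qed
  have "(q^n)^2 = 1" using q2n by (simp add: power_mult[symmetric] mult.commute)
  then have "q^n = 1 \<or> q^n = -1" by (simp add: power2_eq_1_iff)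
  moreover have "q^n \<noteq> 1" using prim[of n] assms(2) by simp
  ultimately have qn: "q^n = -1" by simp
  have Smod: "S_mod q (m mod (2*n)) = S_mod q m" for m unfolding S_mod_def qm ..
  have Mmod: "M_mod q (m mod (2*n)) = M_mod q m" for m
    unfolding M_mod_def power_Suc2[unfolded Suc_eq_plus1] qm ..
  define s where "s = (q^i)^n"
  have ss: "s*s = 1" unfolding s_def by (metis (no_types, lifting) power_mult_distrib power_mult[symmetric]
      mult.commute power_one qn mult_minus1 mult_minus1_right minus_minus power_add)
  have s0: "s \<noteq> 0" using ss by auto
  have s': "(q^(i+1))^n = -s" unfolding s_def by (simp add: power_mult_distrib qn)
  define c' where "c' = a * (1 - inverse q ^ 2) * (q^(i+1))^(n+1) * q^(j+1)"
  define l where "l = q^(i+j)"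
  define t where "t = c' / (l * (1 - q^2))"
  have l0: "l \<noteq> 0" unfolding l_def using q0 by simp
  have ct: "c' = t * l * (1 - q^2)"
  proof (cases "q^2 = 1")
    case True
    then have "inverse q ^ 2 = 1" by (simp add: power_inverse)
    then show ?thesis unfolding c'_def t_def by simp
  next
    case False
    then show ?thesis unfolding t_def using l0 by simp
  qed
  have 1: "mod_iso (tensor_mod n q a (S_mod q i) (S_mod q j)) (S_mod q ((i+j) mod (2*n)))"
    unfolding Smod tensor_SS unfolding S_mod_def mod_iso_def Let_def
    by (auto intro!: exI[of _ "1\<^sub>m 1"] simp: power_add)
  have 2: "mod_iso (tensor_mod n q a (S_mod q i) (M_mod q j)) (M_mod q ((i+j) mod (2*n)))"
  proof -
    have "M_mod q (i+j) = (mat 2 2 (\<lambda>(r,c). if r = c then (if r = 0 then q^(i+j) else q^(i+j)*q) else 0),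
      mat 2 2 (\<lambda>(r,c). if r = 1 \<and> c = 0 then 1 else 0))"
      unfolding M_mod_def by (simp, rule cong_mat, auto)
    then show ?thesis unfolding Mmod tensor_SM s_def[symmetric] using iso2[OF s0, of "q^(i+j)" q] by simp
  qed
  have 3: "mod_iso (tensor_mod n q a (M_mod q i) (M_mod q j))
              (dsum_mod (M_mod q ((i+j) mod (2*n))) (M_mod q ((i+j+1) mod (2*n))))"
    unfolding Mmod tensor_MM dsum_MM s' c'_def[symmetric] l_def[symmetric] s_def[symmetric]
    by (rule iso4[OF ss ct])
  show "mod_iso (tensor_mod n q a (S_mod q i) (S_mod q j)) (S_mod q ((i+j) mod (2*n))) \<and>
      mod_iso (tensor_mod n q a (S_mod q i) (M_mod q j)) (M_mod q ((i+j) mod (2*n))) \<and>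
      mod_iso (tensor_mod n q a (M_mod q i) (M_mod q j))
              (dsum_mod (M_mod q ((i+j) mod (2*n))) (M_mod q ((i+j+1) mod (2*n))))"
    using 1 2 3 by blast
qed

end
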